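(* Consider the asynchronous network Newton method described in the context with $0<\varepsilon\le1$, let $t\ge1$, and set $Q(t-1)=\big(D(t-1)^{-1/2}BD(t-1)^{-1/2}\big)^2$. Then for any $y\in\mathbb{R}^n$ that is $\mathcal{F}_{t-1}$-measurable, $$\mathbb{E}\Big[\big\|\big(I-\varepsilon\Phi(t)+\varepsilon\Phi(t)Q(t-1)\big)y\big\|\;\Big|\;\mathcal{F}_{t-1}\Big]\le\Gamma_2\|y\|,\qquad \Gamma_2=\left(\frac{n-1+(1-\varepsilon+\varepsilon\rho^2)^2}{n}\right)^{1/2}<1 .$$
   Context: Setup. Let $n\ge 1$ be the number of agents and $\alpha>0$ a scalar. $W\in\mathbb{R}^{n\times n}$ is a symmetric nonnegative matrix with $W\mathbb{1}=\mathbb{1}$ (where $\mathbb{1}$ is the all-ones vector), $\mathrm{null}(I-W)=\mathrm{span}\{\mathbb{1}\}$, $0\le W_{ij}<1$ for all $i,j$, and $\delta\le W_{ii}\le\Delta$ for all $i$, for constants $0<\delta\le\Delta<1$. Each $f_i:\mathbb{R}\to\mathbb{R}$ is twice continuously differentiable with $0<m\le f_i''(s)\le M<\infty$ for all $s$ and $|f_i''(a)-f_i''(b)|\le L|a-b|$ for all $a,b$. Define $F(x)=\frac12 x^T(I-W)x+\alpha\sum_{i=1}^n f_i(x_i)$ for $x\in\mathbb{R}^n$, with minimum value $F^*$ and minimizer $x^*$. Let $g(x)=\nabla F(x)$, $G(x)=\mathrm{diag}(f_1''(x_1),\dots,f_n''(x_n))$, $H(x)=\nabla^2F(x)=I-W+\alpha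 G(x)$. Let $W_d$ be the diagonal matrix with $[W_d]_{ii}=W_{ii}$, and set $D(x)=\alpha G(x)+2(I-W_d)$ (diagonal, positive definite) and $B=I-2W_d+W$, so $H(x)=D(x)-B$. Define the approximate Hessian inverse $\hat H(x)^{-1}=D(x)^{-1/2}\big(I+D(x)^{-1/2}BD(x)^{-1/2}\big)D(x)^{-1/2}$. Constants: $\rho=\frac{2(1-\delta)}{2(1-\delta)+\alpha m}$, $\Lambda=\frac{1+\rho}{2(1-\Delta)+\alpha m}$, $\lambda=\frac{1}{2(1-\delta)+\alpha M}$. Algorithm (asynchronous network Newton). Given $x(0)\in\mathbb{R}^n$ and stepsize $\varepsilon>0$, let $\Phi(1),\Phi(2),\dots$ be i.i.d. random diagonal $n\times n$ matrices, each equal to $e_ie_i^T$ (the matrix with a single $1$ in position $(i,i)$ and zeros elsewhere) with probability $1/n$ for each $i=1,\dots,n$ (i.e., one uniformly random agent is active per iteration). The iterates are $x(t)=x(t-1)-\varepsilon\,\Phi(t)\hat H(x(t-1))^{-1}g(x(t-1))$, $t\ge1$. Write $g(t)=g(x(t))$, $D(t)=D(x(t))$, $H(t)=H(x(t))$, $\hat H(t)^{-1}=\hat H(x(t))^{-1}$. $\mathcal{F}_t$ denotes the $\sigma$-field generated by $\Phi(1),\dots,\Phi(t)$ (so $x(t)$ is $\mathcal{F}_t$-measurable). *)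

theory Defs
  imports "HOL-Probability.Probability"
begin

text \<open>Agents are indexed by a finite type 'n, so n = CARD('n).
  Vectors are real^'n, matrices real^'n^'n.\<close>

definition diagW :: "real^'n^'n \<Rightarrow> real^'n^'n" where
  "diagW W = (\<chi> i j. if i = j then W $ i $ i else 0)"

definition Dmat :: "real^'n^'n \<Rightarrow> real \<Rightarrow> ('n \<Rightarrow> real \<Rightarrow> real) \<Rightarrow> real^'n \<Rightarrow> real^'n^'n" where
  "Dmat W \<alpha> f2 x = (\<chi> i j. if i = j then \<alpha> * f2 i (x $ i) + 2 * (1 - W $ i $ i) else 0)"

definition Dmhalf :: "real^'n^'n \<Rightarrow> real \<Rightarrow> ('n \<Rightarrow> real \<Rightarrow> real) \<Rightarrow> real^'n \<Rightarrow> real^'n^'n" where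
  "Dmhalf W \<alpha> f2 x = (\<chi> i j. if i = j then 1 / sqrt (Dmat W \<alpha> f2 x $ i $ i) else 0)"

definition Bmat :: "real^'n^'n \<Rightarrow> real^'n^'n" where
  "Bmat W = mat 1 - 2 *\<^sub>R diagW W + W"

definition Hhat_inv :: "real^'n^'n \<Rightarrow> real \<Rightarrow> ('n \<Rightarrow> real \<Rightarrow> real) \<Rightarrow> real^'n \<Rightarrow> real^'n^'n" where
  "Hhat_inv W \<alpha> f2 x =
     Dmhalf W \<alpha> f2 x ** (mat 1 + Dmhalf W \<alpha> f2 x ** Bmat W ** Dmhalf W \<alpha> f2 x) ** Dmhalf W \<alpha> f2 x"

definition Qmat :: "real^'n^'n \<Rightarrow> real \<Rightarrow> ('n \<Rightarrow> real \<Rightarrow> real) \<Rightarrow> real^'n \<Rightarrow> real^'n^'n" where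
  "Qmat W \<alpha> f2 x =
     (Dmhalf W \<alpha> f2 x ** Bmat W ** Dmhalf W \<alpha> f2 x) ** (Dmhalf W \<alpha> f2 x ** Bmat W ** Dmhalf W \<alpha> f2 x)"

definition gradF :: "real^'n^'n \<Rightarrow> real \<Rightarrow> ('n \<Rightarrow> real \<Rightarrow> real) \<Rightarrow> real^'n \<Rightarrow> real^'n" where
  "gradF W \<alpha> f1 x = (mat 1 - W) *v x + \<alpha> *\<^sub>R (\<chi> i. f1 i (x $ i))"

definition Emat :: "'n \<Rightarrow> real^'n^'n" where
  "Emat k = (\<chi> i j. if i = k \<and> j = k then 1 else 0)"

text \<open>Iterates of the asynchronous network Newton method; the active agent at
  iteration t is I t omega, i.e. Phi(t) = Emat (I t omega).\<close>
primrec xiter :: "real^'n^'n \<Rightarrow> real \<Rightarrow> ('n \<Rightarrow> real \<Rightarrow> real) \<Rightarrow> ('n \<Rightarrow> real \<Rightarrow> real)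
     \<Rightarrow> real \<Rightarrow> real^'n \<Rightarrow> (nat \<Rightarrow> 'a \<Rightarrow> 'n) \<Rightarrow> nat \<Rightarrow> 'a \<Rightarrow> real^'n" where
  "xiter W \<alpha> f1 f2 \<epsilon> x0 I 0 \<omega> = x0"
| "xiter W \<alpha> f1 f2 \<epsilon> x0 I (Suc t) \<omega> =
     xiter W \<alpha> f1 f2 \<epsilon> x0 I t \<omega>
     - \<epsilon> *\<^sub>R (Emat (I (Suc t) \<omega>) *v (Hhat_inv W \<alpha> f2 (xiter W \<alpha> f1 f2 \<epsilon> x0 I t \<omega>)
                  *v gradF W \<alpha> f1 (xiter W \<alpha> f1 f2 \<epsilon> x0 I t \<omega>)))"

text \<open>F_s: sigma-field generated by Phi(1),...,Phi(s) (trivial for s = 0).\<close>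
definition Filt :: "'a measure \<Rightarrow> (nat \<Rightarrow> 'a \<Rightarrow> 'n) \<Rightarrow> nat \<Rightarrow> 'a measure" where
  "Filt M I s = sigma (space M) {I k -` A \<inter> space M | k A. k \<in> {1..s}}"

end

theory Submission
  imports Defs
begin


lemma norm_vec_sq: "norm (x::real^'n) = sqrt (\<Sum>i\<in>UNIV. (x$i)^2)"
  by (simp add: norm_vec_def L2_set_def)

lemma schur:
  fixes C :: "real^'n^'n" and u x :: "real^'n"
  assumes nn: "\<And>i j. 0 \<le> C$i$j" and sym: "\<And>i j. C$i$j = C$j$i" and up: "\<And>i. 0 < u$i"
   and row: "\<And>i. (\<Sum>j\<in>UNIV. C$i$j * u$j) \<le> r * u$i" and r: "0 \<le> r"
  shows "norm (C *v x) \<le> r * norm x"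
proof -
  define S where "S i = (\<Sum>j\<in>UNIV. C$i$j * (x$j)^2 / u$j)" for i
  have S0: "0 \<le> S i" for i unfolding S_def using nn up by (intro sum_nonneg divide_nonneg_pos mult_nonneg_nonneg) auto
  have ci: "((C *v x)$i)^2 \<le> r * u$i * S i" for i
  proof -
    have "((C *v x)$i)^2 = (\<Sum>j\<in>UNIV. sqrt (C$i$j * u$j) * (sqrt (C$i$j / u$j) * x$j))^2"
    proof -
      have "sqrt (C$i$j * u$j) * (sqrt (C$i$j / u$j) * x$j) = C$i$j * x$j" for j
      proof -
        have "sqrt (C$i$j * u$j) * sqrt (C$i$j / u$j) = sqrt ((C$i$j)^2)"
          using up[of j] by (simp add: real_sqrt_mult[symmetric] power2_eq_square)
        also have "\<dots> = C$i$j" using nn by simp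
        finally show ?thesis by (simp add: mult.assoc[symmetric])
      qed
      note eq = this
      show ?thesis by (simp only: eq) (simp add: matrix_vector_mult_def)
    qed
    also have "\<dots> \<le> (\<Sum>j\<in>UNIV. (sqrt (C$i$j * u$j))^2) * (\<Sum>j\<in>UNIV. (sqrt (C$i$j / u$j) * x$j)^2)"
      by (rule Cauchy_Schwarz_ineq_sum)
    also have "\<dots> = (\<Sum>j\<in>UNIV. C$i$j * u$j) * S i"
      using nn up unfolding S_def
      by (intro arg_cong2[where f="(*)"] sum.cong) (auto simp: power_mult_distrib less_imp_le)
    also have "\<dots> \<le> r * u$i * S i" using row[of i] S0[of i] by (rule mult_right_mono)
    finally show ?thesis .
  qed
  have "(\<Sum>i\<in>UNIV. ((C *v x)$i)^2) \<le> (\<Sum>i\<in>UNIV. r * u$i * S i)" by (rule sum_mono) (rule ci)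
  also have "\<dots> = r * (\<Sum>j\<in>UNIV. (x$j)^2 / u$j * (\<Sum>i\<in>UNIV. C$j$i * u$i))"
  proof -
    have "(\<Sum>i\<in>UNIV. r * u$i * S i) = (\<Sum>i\<in>UNIV. \<Sum>j\<in>UNIV. r * u$i * (C$i$j * (x$j)^2 / u$j))"
      unfolding S_def by (simp add: sum_distrib_left)
    also have "\<dots> = (\<Sum>j\<in>UNIV. \<Sum>i\<in>UNIV. r * u$i * (C$i$j * (x$j)^2 / u$j))"
      by (rule sum.swap)
    also have "\<dots> = (\<Sum>j\<in>UNIV. r * ((x$j)^2 / u$j * (\<Sum>i\<in>UNIV. C$j$i * u$i)))"
      by (simp add: sum_distrib_left sym mult_ac)
    also have "\<dots> = r * (\<Sum>j\<in>UNIV. (x$j)^2 / u$j * (\<Sum>i\<in>UNIV. C$j$i * u$i))"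
      by (simp add: sum_distrib_left)
    finally show ?thesis .
  qed
  also have "\<dots> \<le> r * (\<Sum>j\<in>UNIV. (x$j)^2 / u$j * (r * u$j))"
    using r up row by (intro mult_left_mono sum_mono) (auto intro!: mult_left_mono simp: less_imp_le)
  also have "\<dots> = r^2 * (\<Sum>j\<in>UNIV. (x$j)^2)"
    using up by (simp add: sum_distrib_left power2_eq_square less_imp_neq[symmetric] mult_ac)
  finally have "(\<Sum>i\<in>UNIV. ((C *v x)$i)^2) \<le> r^2 * (\<Sum>j\<in>UNIV. (x$j)^2)" .
  then have "sqrt (\<Sum>i\<in>UNIV. ((C *v x)$i)^2) \<le> sqrt (r^2 * (\<Sum>j\<in>UNIV. (x$j)^2))"
    by (rule real_sqrt_le_mono)
  then show ?thesis using r by (simp add: norm_vec_sq real_sqrt_mult)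
qed

lemma mmult_entry: "(X ** Y) $ i $ j = (\<Sum>k\<in>UNIV. X$i$k * Y$k$j)"
  by (simp add: matrix_matrix_mult_def)

lemma mvmult_entry: "(X *v y) $ i = (\<Sum>k\<in>UNIV. X$i$k * y$k)"
  by (simp add: matrix_vector_mult_def)

lemma sum_diag_left: "(\<Sum>l\<in>UNIV. (if i = l then a l else 0) * b l) = a i * (b i::real)"
  for b :: "'n::finite \<Rightarrow> real"
proof -
  have "(\<Sum>l\<in>UNIV. (if i = l then a l else 0) * b l) = (\<Sum>l\<in>UNIV. (if i = l then a i * b i else 0))"
    by (intro sum.cong) auto
  then show ?thesis by (simp add: sum.delta)
qed

lemma sum_diag_right: "(\<Sum>l\<in>UNIV. b l * (if l = j then a l else 0)) = (b j::real) * a j"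
  for b :: "'n::finite \<Rightarrow> real"
proof -
  have "(\<Sum>l\<in>UNIV. b l * (if l = j then a l else 0)) = (\<Sum>l\<in>UNIV. (if l = j then b j * a j else 0))"
    by (intro sum.cong) auto
  then show ?thesis by (simp add: sum.delta)
qed

lemma C_entry: "(Dmhalf W \<alpha> f2 x ** Bmat W ** Dmhalf W \<alpha> f2 x)$i$j
   = (1 / sqrt (Dmat W \<alpha> f2 x $i$i)) * Bmat W $i$j * (1 / sqrt (Dmat W \<alpha> f2 x $j$j))"
proof -
  have 1: "(Dmhalf W \<alpha> f2 x ** Bmat W)$i$k = (1 / sqrt (Dmat W \<alpha> f2 x $i$i)) * Bmat W $i$k" for k
    by (simp add: matrix_matrix_mult_def Dmhalf_def sum_diag_left)
  show ?thesis
    apply (subst mmult_entry)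
    apply (simp only: 1)
    apply (simp only: Dmhalf_def vec_lambda_beta sum_diag_right)
    done
qed

lemma Bmat_entry: "Bmat W $ i $ j = (if i = j then 1 - W$i$i else W$i$j)"
  by (simp add: Bmat_def diagW_def mat_def)

lemma Dmat_entry: "Dmat W \<alpha> f2 x $ i $ i = \<alpha> * f2 i (x $ i) + 2 * (1 - W $ i $ i)"
  by (simp add: Dmat_def)

lemma C_norm:
  fixes W :: "real^'n^'n"
  assumes W_sym: "transpose W = W"
    and W_nonneg: "\<And>i j. 0 \<le> W $ i $ j"
    and W_lt1: "\<And>i j. W $ i $ j < 1"
    and W_stoch: "W *v (\<chi> i. 1) = (\<chi> i. 1)"
    and W_diag: "\<And>i. \<delta> \<le> W $ i $ i \<and> W $ i $ i \<le> \<Delta>"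
    and \<delta>\<Delta>: "\<delta> \<le> \<Delta>" and \<Delta>_lt1: "\<Delta> < 1"
    and \<alpha>_pos: "0 < \<alpha>" and m_pos: "0 < m"
    and f2_bounds: "\<And>i s. m \<le> f2 i s"
  shows "norm ((Dmhalf W \<alpha> f2 x ** Bmat W ** Dmhalf W \<alpha> f2 x) *v v)
     \<le> (2 * (1 - \<delta>) / (2 * (1 - \<delta>) + \<alpha> * m)) * norm v"
proof (rule schur)
  define D where "D i = \<alpha> * f2 i (x $ i) + 2 * (1 - W $ i $ i)" for i
  have Dpos: "0 < D i" for i using W_lt1[of i i] \<alpha>_pos m_pos f2_bounds[of i "x$i"] unfolding D_def
    by (smt (verit) mult_pos_pos)
  have Wsym: "W$i$j = W$j$i" for i j using W_sym by (metis transpose_def vec_lambda_beta)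
  have rows: "(\<Sum>j\<in>UNIV. W$i$j) = 1" for i
  proof -
    have "(W *v (\<chi> i. 1)) $ i = 1" using W_stoch by simp
    then show ?thesis by (simp add: matrix_vector_mult_def)
  qed
  have Brow: "(\<Sum>j\<in>UNIV. Bmat W $i$j) = 2 * (1 - W$i$i)" for i
  proof -
    have "(\<Sum>j\<in>UNIV. Bmat W $i$j) = (\<Sum>j\<in>UNIV. W$i$j + (if j = i then 1 - 2 * W$i$i else 0))"
      by (intro sum.cong) (auto simp: Bmat_entry)
    also have "\<dots> = 1 + (1 - 2 * W$i$i)" by (simp add: sum.distrib rows)
    finally show ?thesis by simp
  qed
  let ?C = "Dmhalf W \<alpha> f2 x ** Bmat W ** Dmhalf W \<alpha> f2 x"
  let ?u = "\<chi> i. sqrt (D i)"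
  show "0 \<le> ?C$i$j" for i j
  proof -
    have "0 \<le> Bmat W $i$j" using W_nonneg[of i j] W_lt1[of i i] W_lt1[of j j] by (simp add: Bmat_entry less_imp_le)
    moreover have "0 < Dmat W \<alpha> f2 x $i$i" "0 < Dmat W \<alpha> f2 x $j$j"
      using Dpos by (auto simp: Dmat_entry D_def)
    ultimately show ?thesis unfolding C_entry by simp
  qed
  show "?C$i$j = ?C$j$i" for i j
    by (simp add: C_entry Bmat_entry Wsym)
  show "0 < ?u $ i" for i using Dpos by simp
  have \<delta>1: "\<delta> < 1" using \<delta>\<Delta> \<Delta>_lt1 by simp
  show "0 \<le> 2 * (1 - \<delta>) / (2 * (1 - \<delta>) + \<alpha> * m)" using \<delta>1 \<alpha>_pos m_pos by simp
  fix i
  have "(\<Sum>j\<in>UNIV. ?C$i$j * ?u$j) = (\<Sum>j\<in>UNIV. (1 / sqrt (D i)) * Bmat W $i$j)"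
  proof (intro sum.cong refl)
    fix j
    have Dm: "Dmat W \<alpha> f2 x $k$k = D k" for k by (simp add: Dmat_entry D_def)
    show "?C$i$j * ?u$j = (1 / sqrt (D i)) * Bmat W $i$j"
      using Dpos[of j] by (simp add: C_entry Dm)
  qed
  also have "\<dots> = 2 * (1 - W$i$i) / sqrt (D i)" by (simp add: sum_divide_distrib[symmetric] Brow)
  also have "\<dots> \<le> (2 * (1 - \<delta>) / (2 * (1 - \<delta>) + \<alpha> * m)) * sqrt (D i)"
  proof -
    let ?s = "2 * (1 - W$i$i)"
    have s1: "?s \<le> 2 * (1 - \<delta>)" "0 \<le> ?s" using W_diag[of i] W_lt1[of i i] by auto
    have f: "\<alpha> * m \<le> \<alpha> * f2 i (x$i)" using f2_bounds \<alpha>_pos by simp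
    have K: "0 < 2 * (1 - \<delta>) + \<alpha> * m" using \<delta>1 \<alpha>_pos m_pos by (simp add: add_pos_pos)
    have "?s * (2 * (1 - \<delta>) + \<alpha> * m) \<le> 2 * (1 - \<delta>) * D i"
    proof -
      have "?s * (\<alpha> * m) \<le> 2 * (1 - \<delta>) * (\<alpha> * m)"
        using s1 \<alpha>_pos m_pos by (intro mult_right_mono) auto
      also have "\<dots> \<le> 2 * (1 - \<delta>) * (\<alpha> * f2 i (x$i))"
        by (rule mult_left_mono[OF f]) (use \<delta>1 in auto)
      finally show ?thesis unfolding D_def by (simp add: algebra_simps)
    qed
    then have "?s \<le> (2 * (1 - \<delta>) / (2 * (1 - \<delta>) + \<alpha> * m)) * D i"
      using K by (simp add: field_simps)
    then have "?s / sqrt (D i) \<le> (2 * (1 - \<delta>) / (2 * (1 - \<delta>) + \<alpha> * m)) * D i / sqrt (D i)"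
      using Dpos[of i] by (intro divide_right_mono) auto
    also have "\<dots> = (2 * (1 - \<delta>) / (2 * (1 - \<delta>) + \<alpha> * m)) * sqrt (D i)"
    proof -
      have "D i / sqrt (D i) = sqrt (D i)" using Dpos[of i] by (simp add: real_div_sqrt less_imp_le)
      then show ?thesis by (metis times_divide_eq_right)
    qed
    finally show ?thesis .
  qed
  also have "\<dots> = (2 * (1 - \<delta>) / (2 * (1 - \<delta>) + \<alpha> * m)) * ?u $ i" by simp
  finally show "(\<Sum>j\<in>UNIV. ?C$i$j * ?u$j) \<le> (2 * (1 - \<delta>) / (2 * (1 - \<delta>) + \<alpha> * m)) * ?u $ i" .
qed

lemma sum_if_eq: "(\<Sum>l\<in>UNIV. (if l = i then a l else 0) * b l) = a i * (b i::real)"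
  for b :: "'n::finite \<Rightarrow> real"
proof -
  have "(\<Sum>l\<in>UNIV. (if l = i then a l else 0) * b l) = (\<Sum>l\<in>UNIV. (if l = i then a i * b i else 0))"
    by (intro sum.cong) auto
  then show ?thesis by (simp add: sum.delta)
qed

lemma Emat_mv: "(Emat i *v v) $ j = (if j = i then v $ i else 0)"
proof (cases "j = i")
  case True
  then show ?thesis using sum_if_eq[of i "\<lambda>_. 1" "\<lambda>k. v$k"] by (simp add: mvmult_entry Emat_def)
qed (simp add: mvmult_entry Emat_def)

lemma smv: "((c::real) *\<^sub>R A) *v v = c *\<^sub>R (A *v v)" for A :: "real^'m::finite^'k"
  by (rule scaleR_matrix_vector_assoc[symmetric])

lemma step_vec: "((mat 1 - \<epsilon> *\<^sub>R Emat i + \<epsilon> *\<^sub>R (Emat i ** Q)) *v y) $ j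
   = (if j = i then (1 - \<epsilon>) * y$i + \<epsilon> * (Q *v y)$i else y$j)"
proof -
  have "(mat 1 - \<epsilon> *\<^sub>R Emat i + \<epsilon> *\<^sub>R (Emat i ** Q)) *v y
      = y - \<epsilon> *\<^sub>R (Emat i *v y) + \<epsilon> *\<^sub>R (Emat i *v (Q *v y))"
    by (simp only: matrix_vector_mult_add_rdistrib matrix_vector_mult_diff_rdistrib
        smv matrix_vector_mul_assoc matrix_vector_mul_lid)
  then show ?thesis
    by (simp only: vector_add_component vector_minus_component vector_scaleR_component Emat_mv)
      (simp add: algebra_simps)
qed

lemma norm_sq_vec: "(norm (x::real^'n))^2 = (\<Sum>i\<in>UNIV. (x$i)^2)"
  by (simp add: norm_vec_sq sum_nonneg)

lemma det_bound:
  fixes Q :: "real^'n^'n" and y :: "real^'n"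
  assumes Qn: "\<And>v. norm (Q *v v) \<le> r * norm v" and r: "0 \<le> r" and e0: "0 < \<epsilon>" and e1: "\<epsilon> \<le> 1"
  shows "(\<Sum>i\<in>UNIV. norm ((mat 1 - \<epsilon> *\<^sub>R Emat i + \<epsilon> *\<^sub>R (Emat i ** Q)) *v y)) / real CARD('n)
     \<le> sqrt ((real CARD('n) - 1 + (1 - \<epsilon> + \<epsilon> * r)^2) / real CARD('n)) * norm y"
proof -
  define a where "a i = norm ((mat 1 - \<epsilon> *\<^sub>R Emat i + \<epsilon> *\<^sub>R (Emat i ** Q)) *v y)" for i
  define z where "z = (1 - \<epsilon>) *\<^sub>R y + \<epsilon> *\<^sub>R (Q *v y)"
  define Y where "Y = (\<Sum>j\<in>UNIV. (y$j)^2)"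
  define n where "n = real CARD('n)"
  define c where "c = 1 - \<epsilon> + \<epsilon> * r"
  have n1: "1 \<le> n" unfolding n_def by simp
  have c0: "0 \<le> c" unfolding c_def using e1 e0 r by simp
  have asq: "(a i)^2 = Y - (y$i)^2 + (z$i)^2" for i
  proof -
    have "(a i)^2 = (\<Sum>j\<in>UNIV. (if j = i then (z$i)^2 else (y$j)^2))"
      unfolding a_def norm_sq_vec step_vec by (intro sum.cong) (auto simp: z_def algebra_simps)
    also have "\<dots> = (\<Sum>j\<in>UNIV. (y$j)^2 + (if j = i then (z$i)^2 - (y$i)^2 else 0))"
      by (intro sum.cong) auto
    also have "\<dots> = Y + ((z$i)^2 - (y$i)^2)"
      unfolding Y_def by (simp add: sum.distrib sum.delta)
    finally show ?thesis by simp
  qed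
  have "(\<Sum>i\<in>UNIV. (a i)^2) = n * Y - Y + (norm z)^2"
    unfolding asq norm_sq_vec Y_def n_def by (simp add: sum.distrib sum_subtractf)
  moreover have "norm z \<le> c * norm y"
  proof -
    have "norm z \<le> norm ((1 - \<epsilon>) *\<^sub>R y) + norm (\<epsilon> *\<^sub>R (Q *v y))"
      unfolding z_def by (rule norm_triangle_ineq)
    also have "\<dots> = (1 - \<epsilon>) * norm y + \<epsilon> * norm (Q *v y)" using e0 e1 by simp
    also have "\<dots> \<le> (1 - \<epsilon>) * norm y + \<epsilon> * (r * norm y)"
      using Qn[of y] e0 by (intro add_left_mono mult_left_mono) auto
    finally show ?thesis unfolding c_def by (simp add: algebra_simps)
  qed
  then have "(norm z)^2 \<le> (c * norm y)^2" by (intro power_mono) auto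
  ultimately have S: "(\<Sum>i\<in>UNIV. (a i)^2) \<le> (n - 1 + c^2) * Y"
    using norm_sq_vec[of y] unfolding Y_def by (simp add: power_mult_distrib algebra_simps)
  have CS: "(\<Sum>i\<in>UNIV. a i)^2 \<le> n * (\<Sum>i\<in>UNIV. (a i)^2)"
    using Cauchy_Schwarz_ineq_sum[of "\<lambda>_. 1::real" a UNIV] by (simp add: n_def)
  have "((\<Sum>i\<in>UNIV. a i) / n)^2 = (\<Sum>i\<in>UNIV. a i)^2 / n^2" by (simp add: power_divide)
  also have "\<dots> \<le> n * ((n - 1 + c^2) * Y) / n^2"
    using CS S n1 by (intro divide_right_mono) (auto intro: order_trans mult_left_mono)
  also have "\<dots> = (n - 1 + c^2) / n * Y" using n1 by (simp add: power2_eq_square field_simps)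
  finally have "(\<Sum>i\<in>UNIV. a i) / n \<le> sqrt ((n - 1 + c^2) / n * Y)" by (rule real_le_rsqrt)
  also have "\<dots> = sqrt ((n - 1 + c^2) / n) * norm y"
  proof -
    have "Y = (norm y)^2" using norm_sq_vec[of y] by (simp add: Y_def)
    then have Ysq: "sqrt Y = norm y" by simp
    show ?thesis by (simp only: real_sqrt_mult Ysq)
  qed
  finally show ?thesis unfolding a_def n_def c_def .
qed




lemma Filt_gen_Pow: "{I k -` A \<inter> space M | k A. k \<in> {1..s}} \<subseteq> Pow (space M)"
  by auto

lemma space_Filt[simp]: "space (Filt M I s) = space M"
  by (simp add: Filt_def space_measure_of_conv)

lemma sets_Filt: "sets (Filt M I s) = sigma_sets (space M) {I k -` A \<inter> space M | k A. k \<in> {1..s}}"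
  unfolding Filt_def by (rule sets_measure_of[OF Filt_gen_Pow])

lemma Filt_mono: "s \<le> s' \<Longrightarrow> sets (Filt M I s) \<subseteq> sets (Filt M I s')"
  unfolding sets_Filt by (rule sigma_sets_subseteq) fastforce

lemma meas_mono: "sets A \<subseteq> sets B \<Longrightarrow> space A = space B \<Longrightarrow> f \<in> measurable A N \<Longrightarrow> f \<in> measurable B N"
  by (auto simp: measurable_def)

lemma I_Filt_meas: "1 \<le> k \<Longrightarrow> k \<le> s \<Longrightarrow> I k \<in> measurable (Filt M I s) (count_space UNIV)"
  by (rule measurableI) (auto simp: sets_Filt intro!: sigma_sets.Basic)

lemma Filt_subalg:
  assumes "\<And>k. I k \<in> measurable M (count_space UNIV)"
  shows "subalgebra M (Filt M I s)"
  unfolding subalgebra_def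
proof
  show "sets (Filt M I s) \<subseteq> sets M" unfolding sets_Filt
    by (rule sets.sigma_sets_subset) (use assms in \<open>auto intro: measurable_sets\<close>)
qed simp

definition MM :: "'a measure \<Rightarrow> ('a \<Rightarrow> real^'n^'m) \<Rightarrow> bool" where
  "MM N X \<longleftrightarrow> (\<forall>i j. (\<lambda>\<omega>. X \<omega> $ i $ j) \<in> borel_measurable N)"
definition VM :: "'a measure \<Rightarrow> ('a \<Rightarrow> real^'n) \<Rightarrow> bool" where
  "VM N v \<longleftrightarrow> (\<forall>i. (\<lambda>\<omega>. v \<omega> $ i) \<in> borel_measurable N)"

lemma MM_const: "MM N (\<lambda>_. A)" by (simp add: MM_def)
lemma MM_add: "MM N X \<Longrightarrow> MM N Y \<Longrightarrow> MM N (\<lambda>\<omega>. X \<omega> + Y \<omega>)"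
  unfolding MM_def by (auto intro!: borel_measurable_add)
lemma MM_diff: "MM N X \<Longrightarrow> MM N Y \<Longrightarrow> MM N (\<lambda>\<omega>. X \<omega> - Y \<omega>)"
  unfolding MM_def by (auto intro!: borel_measurable_diff)
lemma MM_scale: "MM N X \<Longrightarrow> MM N (\<lambda>\<omega>. c *\<^sub>R X \<omega>)"
  unfolding MM_def by (auto intro!: borel_measurable_times)
lemma MM_mult: "MM N X \<Longrightarrow> MM N Y \<Longrightarrow> MM N (\<lambda>\<omega>. X \<omega> ** Y \<omega>)"
  unfolding MM_def mmult_entry by (auto intro!: borel_measurable_sum borel_measurable_times)
lemma VM_const: "VM N (\<lambda>_. v)" by (simp add: VM_def)
lemma VM_add: "VM N X \<Longrightarrow> VM N Y \<Longrightarrow> VM N (\<lambda>\<omega>. X \<omega> + Y \<omega>)"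
  unfolding VM_def by (auto intro!: borel_measurable_add)
lemma VM_diff: "VM N X \<Longrightarrow> VM N Y \<Longrightarrow> VM N (\<lambda>\<omega>. X \<omega> - Y \<omega>)"
  unfolding VM_def by (auto intro!: borel_measurable_diff)
lemma VM_scale: "VM N X \<Longrightarrow> VM N (\<lambda>\<omega>. c *\<^sub>R X \<omega>)"
  unfolding VM_def by (auto intro!: borel_measurable_times)
lemma VM_mv: "MM N X \<Longrightarrow> VM N Y \<Longrightarrow> VM N (\<lambda>\<omega>. X \<omega> *v Y \<omega>)"
  unfolding MM_def VM_def mvmult_entry by (auto intro!: borel_measurable_sum borel_measurable_times)

lemma VM_borel: "VM N v \<longleftrightarrow> v \<in> borel_measurable N"
proof
  assume "VM N v"
  then show "v \<in> borel_measurable N"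
    unfolding borel_measurable_euclidean_space[where f=v] VM_def
    by (auto simp: Basis_vec_def cart_eq_inner_axis[symmetric] inner_axis
        intro: borel_measurable_inner)
next
  assume "v \<in> borel_measurable N"
  then show "VM N v" unfolding VM_def by (auto intro: measurable_compose[OF _ borel_measurable_nth])
qed

lemma MM_Dmhalf:
  assumes x: "VM N x" and f2: "\<And>i. f2 i \<in> borel_measurable borel"
  shows "MM N (\<lambda>\<omega>. Dmhalf W \<alpha> f2 (x \<omega>))"
  unfolding MM_def
proof (intro allI)
  fix i j
  have [measurable]: "(\<lambda>\<omega>. x \<omega> $ i) \<in> borel_measurable N" using x by (simp add: VM_def)
  have [measurable]: "f2 i \<in> borel_measurable borel" by (rule f2)
  show "(\<lambda>\<omega>. Dmhalf W \<alpha> f2 (x \<omega>) $ i $ j) \<in> borel_measurable N"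
  proof -
    have m1: "(\<lambda>\<omega>. f2 k (x \<omega> $ k)) \<in> borel_measurable N" for k
      by (rule measurable_compose[OF _ f2]) (use x in \<open>simp add: VM_def\<close>)
    have m2: "(\<lambda>\<omega>. 1 / sqrt (\<alpha> * f2 k (x \<omega> $ k) + (2 - 2 * W $ k $ k))) \<in> borel_measurable N" for k
      using m1[of k] by measurable
    show ?thesis
      by (cases "i = j") (auto simp: Dmhalf_def Dmat_def m2)
  qed
qed

lemma MM_Qmat: "VM N x \<Longrightarrow> (\<And>i. f2 i \<in> borel_measurable borel) \<Longrightarrow> MM N (\<lambda>\<omega>. Qmat W \<alpha> f2 (x \<omega>))"
  unfolding Qmat_def by (intro MM_mult MM_Dmhalf MM_const)

lemma MM_Hhat: "VM N x \<Longrightarrow> (\<And>i. f2 i \<in> borel_measurable borel) \<Longrightarrow> MM N (\<lambda>\<omega>. Hhat_inv W \<alpha> f2 (x \<omega>))"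
  unfolding Hhat_inv_def by (intro MM_mult MM_add MM_Dmhalf MM_const)

lemma VM_grad:
  assumes x: "VM N x" and f1: "\<And>i. f1 i \<in> borel_measurable borel"
  shows "VM N (\<lambda>\<omega>. gradF W \<alpha> f1 (x \<omega>))"
  unfolding gradF_def
proof (intro VM_add VM_mv MM_const x VM_scale)
  show "VM N (\<lambda>\<omega>. \<chi> i. f1 i (x \<omega> $ i))"
    unfolding VM_def
  proof
    fix i
    have [measurable]: "(\<lambda>\<omega>. x \<omega> $ i) \<in> borel_measurable N" using x by (simp add: VM_def)
    have [measurable]: "f1 i \<in> borel_measurable borel" by (rule f1)
    show "(\<lambda>\<omega>. (\<chi> i. f1 i (x \<omega> $ i)) $ i) \<in> borel_measurable N" by simp
  qed
qed

lemma MM_Emat: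
  assumes "J \<in> measurable N (count_space UNIV)"
  shows "MM N (\<lambda>\<omega>. Emat (J \<omega>))"
  unfolding MM_def Emat_def
proof (intro allI)
  fix i j
  have "(\<lambda>\<omega>. (\<lambda>k. if i = k \<and> j = k then 1 else 0::real) (J \<omega>)) \<in> borel_measurable N"
    by (rule measurable_compose[OF assms]) simp
  then show "(\<lambda>\<omega>. (\<chi> i j. if i = J \<omega> \<and> j = J \<omega> then 1 else 0) $ i $ j :: real) \<in> borel_measurable N"
    by (simp add: eq_commute)
qed

lemma VM_xiter:
  assumes f1: "\<And>i. f1 i \<in> borel_measurable borel" and f2: "\<And>i. f2 i \<in> borel_measurable borel"
  shows "VM (Filt M I s) (xiter W \<alpha> f1 f2 \<epsilon> x0 I s)"
proof (induction s)
  case 0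
  show ?case by (simp add: VM_const)
next
  case (Suc s)
  have x: "VM (Filt M I (Suc s)) (xiter W \<alpha> f1 f2 \<epsilon> x0 I s)"
    unfolding VM_def
  proof
    fix i
    show "(\<lambda>\<omega>. xiter W \<alpha> f1 f2 \<epsilon> x0 I s \<omega> $ i) \<in> borel_measurable (Filt M I (Suc s))"
      by (rule meas_mono[OF Filt_mono[of s "Suc s"]]) (use Suc in \<open>auto simp: VM_def\<close>)
  qed
  have J: "I (Suc s) \<in> measurable (Filt M I (Suc s)) (count_space UNIV)"
    by (rule I_Filt_meas) auto
  show ?case
    unfolding xiter.simps
    by (intro VM_diff VM_scale VM_mv MM_Emat[OF J] MM_Hhat VM_grad x f1 f2)
qed

lemma (in sigma_finite_subalgebra) nn_cond_exp_finsum: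
  assumes "finite S" "\<And>i. i \<in> S \<Longrightarrow> g i \<in> borel_measurable M"
  shows "AE x in M. nn_cond_exp M F (\<lambda>x. \<Sum>i\<in>S. g i x) x = (\<Sum>i\<in>S. nn_cond_exp M F (g i) x)"
  using assms
proof (induction S rule: finite_induct)
  case empty
  have "AE x in M. (\<lambda>_. 0::ennreal) x = nn_cond_exp M F (\<lambda>_. 0) x"
    by (rule nn_cond_exp_F_meas) simp
  then show ?case by (auto elim!: eventually_mono)
next
  case (insert a S)
  have ga[measurable]: "g a \<in> borel_measurable M" using insert by auto
  have gS[measurable]: "(\<lambda>x. \<Sum>i\<in>S. g i x) \<in> borel_measurable M"
    using insert by (intro borel_measurable_sum) auto
  have IH: "AE x in M. nn_cond_exp M F (\<lambda>x. \<Sum>i\<in>S. g i x) x = (\<Sum>i\<in>S. nn_cond_exp M F (g i) x)"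
    using insert by auto
  have "AE x in M. nn_cond_exp M F (g a) x + nn_cond_exp M F (\<lambda>x. \<Sum>i\<in>S. g i x) x
      = nn_cond_exp M F (\<lambda>x. g a x + (\<Sum>i\<in>S. g i x)) x"
    by (rule nn_cond_exp_sum) (auto simp: ga gS)
  with IH show ?case using insert by (auto elim!: eventually_elim2)
qed

lemma gen_eq: "{I k -` A \<inter> space M | k A. k \<in> K} = (\<Union>k\<in>K. {I k -` A \<inter> space M | A. A \<in> sets (count_space UNIV)})"
  by auto

lemma indep_part:
  assumes prob: "prob_space M"
    and I_meas: "\<And>k. I k \<in> measurable M (count_space UNIV)"
    and I_indep: "prob_space.indep_vars M (\<lambda>_. count_space UNIV) I {1..}"
    and A: "A \<in> sets (Filt M I s)"
  shows "measure M (A \<inter> (I (Suc s) -` {i} \<inter> space M))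
       = measure M A * measure M (I (Suc s) -` {i} \<inter> space M)"
proof -
  interpret prob_space M by (rule prob)
  define E where "E k = {I k -` A \<inter> space M | A. A \<in> sets (count_space (UNIV::'b set))}" for k
  define Ij where "Ij b = (if b then {1..s} else {Suc s})" for b
  have "indep_sets E {1..}" using I_indep unfolding indep_vars_def2 E_def by auto
  then have ind0: "indep_sets E (\<Union>j. Ij j)"
    by (rule indep_sets_mono_index[rotated]) (auto simp: Ij_def)
  have "indep_sets (\<lambda>j. sigma_sets (space M) (\<Union>k\<in>Ij j. E k)) UNIV"
  proof (rule indep_sets_collect_sigma[OF ind0])
    fix k j
    show "Int_stable (E k)"
    proof (rule Int_stableI)
      fix a b assume "a \<in> E k" "b \<in> E k"
      then obtain A1 A2 where "a = I k -` A1 \<inter> space M" "b = I k -` A2 \<inter> space M"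
        unfolding E_def by auto
      then have eq: "a \<inter> b = I k -` (A1 \<inter> A2) \<inter> space M" by auto
      show "a \<inter> b \<in> E k" unfolding E_def
        by (rule CollectI, rule exI[of _ "A1 \<inter> A2"]) (simp add: eq)
    qed
  next
    show "disjoint_family_on Ij UNIV" by (auto simp: disjoint_family_on_def Ij_def)
  qed
  then have ind: "indep_sets (\<lambda>j. sigma_sets (space M) (\<Union>k\<in>Ij j. E k)) {True, False}"
    by (simp add: UNIV_bool insert_commute)
  define Ab where "Ab b = (if b then A else I (Suc s) -` {i} \<inter> space M)" for b
  have gen: "{I k -` A \<inter> space M | k A. k \<in> {1..s}} = (\<Union>k\<in>Ij True. E k)"
  proof -
    have "Ij True = {1..s}" by (simp add: Ij_def)
    then show ?thesis unfolding E_def by (simp only: gen_eq)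
  qed
  define Fm where "Fm j = sigma_sets (space M) (\<Union>k\<in>Ij j. E k)" for j
  have "Ab \<in> Pi {True, False} (\<lambda>j. sigma_sets (space M) (\<Union>k\<in>Ij j. E k))"
  proof -
    have "A \<in> sigma_sets (space M) (\<Union>k\<in>Ij True. E k)" using A unfolding sets_Filt gen .
    moreover have "I (Suc s) -` {i} \<inter> space M \<in> sigma_sets (space M) (\<Union>k\<in>Ij False. E k)"
      by (rule sigma_sets.Basic) (auto simp: Ij_def E_def)
    ultimately show ?thesis by (auto simp: Ab_def)
  qed
  then have AbF: "Ab \<in> Pi {True, False} Fm" unfolding Fm_def .
  have "\<forall>J\<subseteq>{True, False}. J \<noteq> {} \<longrightarrow> finite J \<longrightarrow>
      (\<forall>A\<in>Pi J Fm. prob (\<Inter>j\<in>J. A j) = (\<Prod>j\<in>J. prob (A j)))"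
    using ind unfolding indep_sets_def Fm_def by (rule conjunct2)
  then have "\<forall>A\<in>Pi {True, False} Fm. prob (\<Inter>j\<in>{True, False}. A j) = (\<Prod>j\<in>{True, False}. prob (A j))"
    by (drule_tac x="{True, False}" in spec) simp
  then have "prob (\<Inter>j\<in>{True, False}. Ab j) = (\<Prod>j\<in>{True, False}. prob (Ab j))"
    using AbF by (rule bspec)
  then show ?thesis by (simp add: Ab_def Int_commute)
qed

theorem mainTheorem5:
  fixes M :: "'a measure"
    and I :: "nat \<Rightarrow> 'a \<Rightarrow> 'n::finite"
    and W :: "real^'n^'n"
    and \<alpha> \<delta> \<Delta> m Mb L \<epsilon> :: real
    and f f1 f2 :: "'n \<Rightarrow> real \<Rightarrow> real"
    and x0 :: "real^'n"
    and t :: nat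
    and y :: "'a \<Rightarrow> real^'n"
  assumes prob: "prob_space M"
    and I_meas: "\<And>k. I k \<in> measurable M (count_space UNIV)"
    and I_indep: "prob_space.indep_vars M (\<lambda>_. count_space UNIV) I {1..}"
    and I_unif: "\<And>k j. k \<ge> 1 \<Longrightarrow> measure M {\<omega> \<in> space M. I k \<omega> = j} = 1 / real CARD('n)"
    and W_sym: "transpose W = W"
    and W_nonneg: "\<And>i j. 0 \<le> W $ i $ j"
    and W_lt1: "\<And>i j. W $ i $ j < 1"
    and W_stoch: "W *v (\<chi> i. 1) = (\<chi> i. 1)"
    and W_null: "{v. (mat 1 - W) *v v = 0} = span {(\<chi> i. 1)}"
    and \<delta>_pos: "0 < \<delta>" and \<delta>\<Delta>: "\<delta> \<le> \<Delta>" and \<Delta>_lt1: "\<Delta> < 1"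
    and W_diag: "\<And>i. \<delta> \<le> W $ i $ i \<and> W $ i $ i \<le> \<Delta>"
    and \<alpha>_pos: "0 < \<alpha>"
    and f_d1: "\<And>i s. (f i has_real_derivative f1 i s) (at s)"
    and f_d2: "\<And>i s. (f1 i has_real_derivative f2 i s) (at s)"
    and f2_cont: "\<And>i. continuous_on UNIV (f2 i)"
    and m_pos: "0 < m" and Mb_fin: "m \<le> Mb"
    and f2_bounds: "\<And>i s. m \<le> f2 i s \<and> f2 i s \<le> Mb"
    and f2_lip: "\<And>i a b. \<bar>f2 i a - f2 i b\<bar> \<le> L * \<bar>a - b\<bar>"
    and \<epsilon>_pos: "0 < \<epsilon>" and \<epsilon>_le1: "\<epsilon> \<le> 1"
    and t_ge1: "t \<ge> 1"
    and y_meas: "y \<in> borel_measurable (Filt M I (t - 1))"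
  shows "(let \<rho> = 2 * (1 - \<delta>) / (2 * (1 - \<delta>) + \<alpha> * m);
              \<Gamma>2 = sqrt ((real CARD('n) - 1 + (1 - \<epsilon> + \<epsilon> * \<rho>\<^sup>2)\<^sup>2) / real CARD('n))
          in (AE \<omega> in M.
                nn_cond_exp M (Filt M I (t - 1))
                  (\<lambda>\<omega>. ennreal (norm ((mat 1 - \<epsilon> *\<^sub>R Emat (I t \<omega>)
                      + \<epsilon> *\<^sub>R (Emat (I t \<omega>) ** Qmat W \<alpha> f2 (xiter W \<alpha> f1 f2 \<epsilon> x0 I (t - 1) \<omega>)))
                      *v y \<omega>))) \<omega>
                \<le> ennreal (\<Gamma>2 * norm (y \<omega>)))
             \<and> \<Gamma>2 < 1)"
proof -
  interpret P: prob_space M by (rule prob)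
  obtain s where ts: "t = Suc s" using t_ge1 by (cases t) auto
  have ts1: "t - 1 = s" using ts by simp
  define F where "F = Filt M I s"
  define n where "n = real CARD('n)"
  have n1: "1 \<le> n" unfolding n_def by simp
  have subalg: "subalgebra M F" unfolding F_def by (rule Filt_subalg[OF I_meas])
  have fms: "finite_measure_subalgebra M F"
    using prob subalg
    by (simp add: finite_measure_subalgebra_def finite_measure_subalgebra_axioms_def prob_space_def)
  interpret S: sigma_finite_subalgebra M F
    by (rule finite_measure_subalgebra_is_sigma_finite[OF fms])
  have f1m: "f1 i \<in> borel_measurable borel" for i
  proof (rule borel_measurable_continuous_onI)
    show "continuous_on UNIV (f1 i)"
      by (rule continuous_at_imp_continuous_on) (use DERIV_isCont[OF f_d2] in blast)
  qed
  have f2m: "f2 i \<in> borel_measurable borel" for i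
    by (rule borel_measurable_continuous_onI[OF f2_cont])
  define \<rho> where "\<rho> = 2 * (1 - \<delta>) / (2 * (1 - \<delta>) + \<alpha> * m)"
  define c where "c = 1 - \<epsilon> + \<epsilon> * \<rho>\<^sup>2"
  define \<Gamma>2 where "\<Gamma>2 = sqrt ((real CARD('n) - 1 + c\<^sup>2) / real CARD('n))"
  have \<delta>1: "\<delta> < 1" using \<delta>\<Delta> \<Delta>_lt1 by simp
  have K: "0 < 2 * (1 - \<delta>) + \<alpha> * m" using \<delta>1 \<alpha>_pos m_pos by (simp add: add_pos_pos)
  have \<rho>0: "0 \<le> \<rho>" unfolding \<rho>_def using \<delta>1 K by simp
  have \<rho>1: "\<rho> < 1" unfolding \<rho>_def using K \<alpha>_pos m_pos by (simp add: field_simps)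
  have \<rho>sq: "\<rho>\<^sup>2 < 1" using power_strict_mono[OF \<rho>1 \<rho>0, of 2] by simp
  have c0: "0 \<le> c" unfolding c_def using \<epsilon>_le1 \<epsilon>_pos by (simp add: add_nonneg_nonneg)
  have c1: "c < 1" unfolding c_def using \<epsilon>_pos \<rho>sq
    by (simp add: algebra_simps mult_strict_left_mono)
  have csq: "c\<^sup>2 < 1" using power_strict_mono[OF c1 c0, of 2] by simp
  have Gam: "\<Gamma>2 < 1" unfolding \<Gamma>2_def using csq n1 by (simp add: n_def)
  define x where "x = xiter W \<alpha> f1 f2 \<epsilon> x0 I s"
  define Q where "Q \<omega> = Qmat W \<alpha> f2 (x \<omega>)" for \<omega>
  define V where "V i \<omega> = (mat 1 - \<epsilon> *\<^sub>R Emat i + \<epsilon> *\<^sub>R (Emat i ** Q \<omega>)) *v y \<omega>" for i \<omega>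
  define h where "h i \<omega> = ennreal (norm (V i \<omega>))" for i \<omega>
  define B where "B i = I t -` {i} \<inter> space M" for i
  have VMx: "VM F x" unfolding F_def x_def by (rule VM_xiter[OF f1m f2m])
  have VMy: "VM F y" using y_meas ts1 unfolding F_def by (simp add: VM_borel)
  have Vm: "V i \<in> borel_measurable F" for i
    unfolding V_def Q_def VM_borel[symmetric]
    by (intro VM_mv MM_add MM_diff MM_const MM_scale MM_mult MM_Qmat VMx VMy f2m)
  have hF[measurable]: "h i \<in> borel_measurable F" for i unfolding h_def using Vm[of i] by measurable
  have hM[measurable]: "h i \<in> borel_measurable M" for i by (rule measurable_from_subalg[OF subalg hF])
  have BM[measurable]: "B i \<in> sets M" for i unfolding B_def by (rule measurable_sets[OF I_meas]) simp
  define f where "f \<omega> = ennreal (norm ((mat 1 - \<epsilon> *\<^sub>R Emat (I t \<omega>)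
                      + \<epsilon> *\<^sub>R (Emat (I t \<omega>) ** Qmat W \<alpha> f2 (xiter W \<alpha> f1 f2 \<epsilon> x0 I (t - 1) \<omega>)))
                      *v y \<omega>))" for \<omega>
  have f_eq: "f \<omega> = (\<Sum>i\<in>UNIV. h i \<omega> * indicator (B i) \<omega>)" if "\<omega> \<in> space M" for \<omega>
  proof -
    have "(\<Sum>i\<in>UNIV. h i \<omega> * indicator (B i) \<omega>) = (\<Sum>i\<in>UNIV. if i = I t \<omega> then h (I t \<omega>) \<omega> else 0)"
      using that by (intro sum.cong) (auto simp: B_def indicator_def)
    also have "\<dots> = h (I t \<omega>) \<omega>" by simp
    finally show ?thesis unfolding f_def ts1 by (simp add: h_def V_def Q_def x_def)
  qed
  have gM: "(\<lambda>\<omega>. \<Sum>i\<in>UNIV. h i \<omega> * indicator (B i) \<omega>) \<in> borel_measurable M" by measurable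
  have fM: "f \<in> borel_measurable M" using gM measurable_cong[where f=f, OF f_eq] by blast
  have Bmeas: "measure M (B i) = 1 / n" for i
  proof -
    have "B i = {\<omega> \<in> space M. I t \<omega> = i}" by (auto simp: B_def)
    then show ?thesis using I_unif[of t i] t_ge1 by (simp add: n_def)
  qed
  have indB: "AE \<omega> in M. nn_cond_exp M F (indicator (B i)) \<omega> = ennreal (1 / n)" for i
  proof -
    have "AE \<omega> in M. (\<lambda>_. ennreal (1 / n)) \<omega> = nn_cond_exp M F (indicator (B i)) \<omega>"
    proof (rule S.nn_cond_exp_charact)
      fix A assume A: "A \<in> sets F"
      then have AM: "A \<in> sets M" using subalg by (auto simp: subalgebra_def)
      have "(\<lambda>x. indicator (B i) x * indicator A x :: ennreal) = indicator (A \<inter> B i)"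
        by (auto simp: indicator_def fun_eq_iff)
      then have "(\<integral>\<^sup>+x\<in>A. indicator (B i) x \<partial>M) = emeasure M (A \<inter> B i)"
        using AM BM[of i] by simp
      also have "\<dots> = ennreal (measure M A * measure M (B i))"
        using indep_part[OF prob I_meas I_indep A[unfolded F_def], of i] AM BM[of i]
        by (simp add: P.emeasure_eq_measure B_def ts)
      also have "\<dots> = ennreal (1 / n) * emeasure M A"
        using AM n1 by (simp add: Bmeas P.emeasure_eq_measure ennreal_mult[symmetric] mult.commute)
      also have "\<dots> = (\<integral>\<^sup>+x\<in>A. ennreal (1 / n) \<partial>M)"
        using AM by (simp add: nn_integral_cmult_indicator)
      finally show "(\<integral>\<^sup>+x\<in>A. indicator (B i) x \<partial>M) = (\<integral>\<^sup>+x\<in>A. ennreal (1 / n) \<partial>M)" .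
    qed auto
    then show ?thesis by (auto elim: eventually_mono)
  qed
  have prodA: "AE \<omega> in M. nn_cond_exp M F (\<lambda>\<omega>. h i \<omega> * indicator (B i) \<omega>) \<omega> = h i \<omega> * ennreal (1 / n)" for i
  proof -
    have "AE \<omega> in M. h i \<omega> * nn_cond_exp M F (indicator (B i)) \<omega> = nn_cond_exp M F (\<lambda>\<omega>. h i \<omega> * indicator (B i) \<omega>) \<omega>"
      by (rule S.nn_cond_exp_prod[OF hF]) simp
    with indB[of i] show ?thesis by (auto elim: eventually_elim2)
  qed
  have allA: "AE \<omega> in M. \<forall>i\<in>UNIV. nn_cond_exp M F (\<lambda>\<omega>. h i \<omega> * indicator (B i) \<omega>) \<omega> = h i \<omega> * ennreal (1 / n)"
    by (rule AE_finite_allI) (simp_all add: prodA)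
  have sumA: "AE \<omega> in M. nn_cond_exp M F (\<lambda>\<omega>. \<Sum>i\<in>UNIV. h i \<omega> * indicator (B i) \<omega>) \<omega>
      = (\<Sum>i\<in>UNIV. nn_cond_exp M F (\<lambda>\<omega>. h i \<omega> * indicator (B i) \<omega>) \<omega>)"
    by (rule S.nn_cond_exp_finsum) auto
  have congA: "AE \<omega> in M. nn_cond_exp M F f \<omega> = nn_cond_exp M F (\<lambda>\<omega>. \<Sum>i\<in>UNIV. h i \<omega> * indicator (B i) \<omega>) \<omega>"
    by (rule S.nn_cond_exp_cong[OF _ fM gM]) (rule AE_I2, rule f_eq)
  have Cn: "norm ((Dmhalf W \<alpha> f2 z ** Bmat W ** Dmhalf W \<alpha> f2 z) *v v) \<le> \<rho> * norm v" for z v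
    unfolding \<rho>_def
    by (rule C_norm[OF W_sym W_nonneg W_lt1 W_stoch W_diag \<delta>\<Delta> \<Delta>_lt1 \<alpha>_pos m_pos]) (use f2_bounds in auto)
  have Qn: "norm (Q \<omega> *v v) \<le> \<rho>\<^sup>2 * norm v" for \<omega> v
  proof -
    let ?C = "Dmhalf W \<alpha> f2 (x \<omega>) ** Bmat W ** Dmhalf W \<alpha> f2 (x \<omega>)"
    have "Q \<omega> *v v = ?C *v (?C *v v)" by (simp add: Q_def Qmat_def matrix_vector_mul_assoc)
    then have "norm (Q \<omega> *v v) \<le> \<rho> * norm (?C *v v)" using Cn by simp
    also have "\<dots> \<le> \<rho> * (\<rho> * norm v)" using Cn \<rho>0 by (intro mult_left_mono) auto
    finally show ?thesis by (simp add: power2_eq_square mult.assoc)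
  qed
  have detA: "(\<Sum>i\<in>UNIV. h i \<omega> * ennreal (1 / n)) \<le> ennreal (\<Gamma>2 * norm (y \<omega>))" for \<omega>
  proof -
    have "(\<Sum>i\<in>UNIV. h i \<omega> * ennreal (1 / n)) = (\<Sum>i\<in>UNIV. ennreal (norm (V i \<omega>) * (1 / n)))"
      unfolding h_def by (intro sum.cong refl, subst ennreal_mult') auto
    also have "\<dots> = ennreal (\<Sum>i\<in>UNIV. norm (V i \<omega>) * (1 / n))"
      using n1 by (intro sum_ennreal) simp
    also have "\<dots> \<le> ennreal (\<Gamma>2 * norm (y \<omega>))"
    proof (rule ennreal_leI)
      have "(\<Sum>i\<in>UNIV. norm (V i \<omega>) * (1 / n)) = (\<Sum>i\<in>UNIV. norm (V i \<omega>)) / n"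
        by (simp add: sum_divide_distrib)
      also have "\<dots> \<le> \<Gamma>2 * norm (y \<omega>)"
        unfolding V_def n_def \<Gamma>2_def c_def
        by (rule det_bound[OF Qn]) (use \<epsilon>_pos \<epsilon>_le1 in auto)
      finally show "(\<Sum>i\<in>UNIV. norm (V i \<omega>) * (1 / n)) \<le> \<Gamma>2 * norm (y \<omega>)" .
    qed
    finally show ?thesis .
  qed
  have mainAE: "AE \<omega> in M. nn_cond_exp M F f \<omega> \<le> ennreal (\<Gamma>2 * norm (y \<omega>))"
    using congA sumA allA
  proof (eventually_elim)
    case (elim \<omega>)
    then show ?case using detA[of \<omega>] by simp
  qed
  show ?thesis
    using mainAE Gam unfolding Let_def \<Gamma>2_def c_def \<rho>_def f_def F_def ts1 by (intro conjI)
qed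

end
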